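(* Let $T$ be a complete theory and $R(x,y)$ a binary relation (formula) of $T$. Suppose that for some $0<\delta<1$ and for all $\epsilon$ with $0<\epsilon<1$ and all $n\in\mathbb{N}$ there is a finite bipartite $R$-graph $(X,Y)$ with $|X|=|Y|\geq n$ which is $\epsilon$-regular with density $d$, where $|d-\delta|<\epsilon$. Then $R$ has the order property.
   Context: Work in a sufficiently saturated model of $T$. A finite bipartite $R$-graph $(X,Y)$ consists of disjoint finite sets $X,Y$ of tuples of the appropriate lengths, with an edge between $x\in X$ and $y\in Y$ iff $R(x,y)$. Its density is $e(X,Y)/|X||Y|$ where $e(X,Y)$ is the number of edges. $(X,Y)$ is $\epsilon$-regular if for all $X'\subseteq X$, $Y'\subseteq Y$ with $|X'|\ge\epsilon|X|$, $|Y'|\ge\epsilon|Y|$, the densities of $(X,Y)$ and $(X',Y')$ differ by less than $\epsilon$. $R$ has the order property if there are $\langle a_i,b_i:i<\omega\rangle$ with $R(a_i,b_j)$ iff $i<j$. *)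

theory Defs
  imports Complex_Main
begin

text \<open>The relation R(x,y) is modelled as a predicate on the interpretations in the
  (saturated) model: x-tuples range over type 'a, y-tuples over type 'b.\<close>

definition edges :: "('a \<Rightarrow> 'b \<Rightarrow> bool) \<Rightarrow> 'a set \<Rightarrow> 'b set \<Rightarrow> nat" where
  "edges R X Y = card {(x, y). x \<in> X \<and> y \<in> Y \<and> R x y}"

definition density :: "('a \<Rightarrow> 'b \<Rightarrow> bool) \<Rightarrow> 'a set \<Rightarrow> 'b set \<Rightarrow> real" where
  "density R X Y = real (edges R X Y) / (real (card X) * real (card Y))"

definition eps_regular :: "real \<Rightarrow> ('a \<Rightarrow> 'b \<Rightarrow> bool) \<Rightarrow> 'a set \<Rightarrow> 'b set \<Rightarrow> bool" where
  "eps_regular \<epsilon> R X Y \<longleftrightarrow>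
     (\<forall>X' Y'. X' \<subseteq> X \<longrightarrow> Y' \<subseteq> Y \<longrightarrow>
        real (card X') \<ge> \<epsilon> * real (card X) \<longrightarrow> real (card Y') \<ge> \<epsilon> * real (card Y) \<longrightarrow>
        \<bar>density R X Y - density R X' Y'\<bar> < \<epsilon>)"

definition order_property :: "('a \<Rightarrow> 'b \<Rightarrow> bool) \<Rightarrow> bool" where
  "order_property R \<longleftrightarrow> (\<exists>(a :: nat \<Rightarrow> 'a) (b :: nat \<Rightarrow> 'b). \<forall>i j. R (a i) (b j) \<longleftrightarrow> i < j)"

text \<open>The consequence of saturation that is relevant here: every countable
  R-configuration (a pattern of R / not-R between countably many x-tuples and
  y-tuples) that is finitely realized in the model is realized in the model.
  Every \<omega>-saturated model (in particular any sufficiently saturated one) has this property.\<close>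

definition R_saturated :: "('a \<Rightarrow> 'b \<Rightarrow> bool) \<Rightarrow> bool" where
  "R_saturated R \<longleftrightarrow>
     (\<forall>P :: nat \<Rightarrow> nat \<Rightarrow> bool.
        (\<forall>k. \<exists>(a :: nat \<Rightarrow> 'a) (b :: nat \<Rightarrow> 'b). \<forall>i<k. \<forall>j<k. R (a i) (b j) \<longleftrightarrow> P i j) \<longrightarrow>
        (\<exists>(a :: nat \<Rightarrow> 'a) (b :: nat \<Rightarrow> 'b). \<forall>i j. R (a i) (b j) \<longleftrightarrow> P i j))"

end

theory Submission
  imports Defs
begin

lemma edges_sum:
  assumes "finite B" "finite C"
  shows "edges R B C = (\<Sum>x\<in>B. card {y\<in>C. R x y})"
proof -
  have "{(x, y). x \<in> B \<and> y \<in> C \<and> R x y} = Sigma B (\<lambda>x. {y\<in>C. R x y})" by auto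
  then show ?thesis unfolding edges_def using assms by (simp add: card_SigmaI)
qed

context
  fixes R :: "'a \<Rightarrow> 'b \<Rightarrow> bool" and X :: "'a set" and Y :: "'b set" and \<epsilon> \<delta> c :: real
  assumes fin: "finite X" "finite Y"
    and ne: "card X > 0" "card Y > 0"
    and reg: "eps_regular \<epsilon> R X Y"
    and dlow: "density R X Y > \<delta> - \<epsilon>"
    and dhigh: "density R X Y < \<delta> + \<epsilon>"
    and eps: "0 < \<epsilon>" and cpos: "0 < c"
    and lowc: "2*\<epsilon> + c \<le> \<delta>" and highc: "\<delta> + 2*\<epsilon> + c \<le> 1"
begin

lemma few_low:
  assumes C: "C \<subseteq> Y" "\<epsilon> * card Y \<le> card C"
  shows "real (card {x\<in>X. real (card {y\<in>C. R x y}) < c * card C}) < \<epsilon> * card X"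
proof (rule ccontr)
  define B where "B = {x\<in>X. real (card {y\<in>C. R x y}) < c * card C}"
  assume "\<not> ?thesis"
  hence Bc: "\<epsilon> * card X \<le> card B" unfolding B_def by simp
  have finB: "finite B" using fin unfolding B_def by simp
  have finC: "finite C" using C fin finite_subset by auto
  have "card B > 0"
  proof -
    have "0 < \<epsilon> * card X" using eps ne by simp
    thus ?thesis using Bc by linarith
  qed
  hence Bne: "B \<noteq> {}" by auto
  have "card C > 0"
  proof -
    have "0 < \<epsilon> * card Y" using eps ne by simp
    thus ?thesis using C by linarith
  qed
  have "real (edges R B C) = (\<Sum>x\<in>B. real (card {y\<in>C. R x y}))"
    using edges_sum[OF finB finC] by simp
  also have "\<dots> < (\<Sum>x\<in>B. c * card C)"
    by (rule sum_strict_mono[OF finB Bne]) (auto simp: B_def)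
  also have "\<dots> = c * (card B * card C)" by simp
  finally have "density R B C < c"
    unfolding density_def using \<open>card B > 0\<close> \<open>card C > 0\<close>
    by (simp add: divide_less_eq)
  moreover have "\<bar>density R X Y - density R B C\<bar> < \<epsilon>"
    using reg C Bc unfolding eps_regular_def B_def by auto
  ultimately show False using dlow lowc by linarith
qed

lemma few_high:
  assumes C: "C \<subseteq> Y" "\<epsilon> * card Y \<le> card C"
  shows "real (card {x\<in>X. real (card {y\<in>C. \<not> R x y}) < c * card C}) < \<epsilon> * card X"
proof (rule ccontr)
  define B where "B = {x\<in>X. real (card {y\<in>C. \<not> R x y}) < c * card C}"
  assume "\<not> ?thesis"
  hence Bc: "\<epsilon> * card X \<le> card B" unfolding B_def by simp
  have finB: "finite B" using fin unfolding B_def by simp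
  have finC: "finite C" using C fin finite_subset by auto
  have "card B > 0"
  proof -
    have "0 < \<epsilon> * card X" using eps ne by simp
    thus ?thesis using Bc by linarith
  qed
  hence Bne: "B \<noteq> {}" by auto
  have "card C > 0"
  proof -
    have "0 < \<epsilon> * card Y" using eps ne by simp
    thus ?thesis using C by linarith
  qed
  have split: "real (card {y\<in>C. R x y}) = card C - real (card {y\<in>C. \<not> R x y})" for x
  proof -
    have "C = {y\<in>C. R x y} \<union> {y\<in>C. \<not> R x y}" by auto
    moreover have "card ({y\<in>C. R x y} \<union> {y\<in>C. \<not> R x y}) = card {y\<in>C. R x y} + card {y\<in>C. \<not> R x y}"
      by (rule card_Un_disjoint) (use finC in auto)
    ultimately have "card C = card {y\<in>C. R x y} + card {y\<in>C. \<not> R x y}" by simp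
    thus ?thesis by simp
  qed
  have "(\<Sum>x\<in>B. (1 - c) * card C) < (\<Sum>x\<in>B. real (card {y\<in>C. R x y}))"
    by (rule sum_strict_mono[OF finB Bne]) (auto simp: B_def split algebra_simps)
  also have "\<dots> = real (edges R B C)"
    using edges_sum[OF finB finC] by simp
  finally have "(1 - c) * (card B * card C) < edges R B C" by (simp add: ac_simps)
  hence "density R B C > 1 - c"
    unfolding density_def using \<open>card B > 0\<close> \<open>card C > 0\<close>
    by (simp add: less_divide_eq)
  moreover have "\<bar>density R X Y - density R B C\<bar> < \<epsilon>"
    using reg C Bc unfolding eps_regular_def B_def by auto
  ultimately show False using dhigh highc by linarith
qed

lemma good_vertex:
  fixes k :: nat
  assumes C: "\<forall>j<k. C j \<subseteq> Y \<and> \<epsilon> * card Y \<le> card (C j)"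
    and k: "2 * k * \<epsilon> \<le> 1"
  shows "\<exists>x\<in>X. \<forall>j<k. c * card (C j) \<le> card {y\<in>C j. R x y} \<and> c * card (C j) \<le> card {y\<in>C j. \<not> R x y}"
proof -
  define B1 where "B1 j = {x\<in>X. real (card {y\<in>C j. R x y}) < c * card (C j)}" for j
  define B2 where "B2 j = {x\<in>X. real (card {y\<in>C j. \<not> R x y}) < c * card (C j)}" for j
  define Bad where "Bad = (\<Union>j<k. B1 j \<union> B2 j)"
  have finB: "finite (B1 j \<union> B2 j)" for j using fin by (simp add: B1_def B2_def)
  have "card Bad < card X"
  proof (cases "k = 0")
    case True thus ?thesis using ne by (simp add: Bad_def lessThan_0)
  next
    case False
    have "card Bad \<le> (\<Sum>j<k. card (B1 j \<union> B2 j))" unfolding Bad_def by (rule card_UN_le) simp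
    also have "\<dots> \<le> (\<Sum>j<k. card (B1 j) + card (B2 j))" by (rule sum_mono) (rule card_Un_le)
    finally have "real (card Bad) \<le> real (\<Sum>j<k. card (B1 j) + card (B2 j))"
      by (simp only: of_nat_le_iff)
    also have "\<dots> = (\<Sum>j<k. real (card (B1 j)) + real (card (B2 j)))" by simp
    also have "\<dots> < (\<Sum>j<k. \<epsilon> * card X + \<epsilon> * card X)"
    proof (rule sum_strict_mono)
      show "finite {..<k}" by simp
      show "{..<k} \<noteq> {}" using False by auto
      fix j assume "j \<in> {..<k}"
      hence "C j \<subseteq> Y" "\<epsilon> * card Y \<le> card (C j)" using C by auto
      from few_low[OF this] few_high[OF this]
      show "real (card (B1 j)) + real (card (B2 j)) < \<epsilon> * card X + \<epsilon> * card X"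
        unfolding B1_def B2_def by linarith
    qed
    also have "\<dots> = (2 * k * \<epsilon>) * card X" by simp
    also have "\<dots> \<le> card X" using k eps by (intro mult_left_le_one_le) auto
    finally show ?thesis by simp
  qed
  moreover have "Bad \<subseteq> X" by (auto simp: Bad_def B1_def B2_def)
  ultimately obtain x where "x \<in> X" "x \<notin> Bad"
  proof -
    assume H: "\<And>x. x \<in> X \<Longrightarrow> x \<notin> Bad \<Longrightarrow> thesis"
    show thesis
    proof (rule ccontr)
      assume "\<not> thesis"
      hence "X \<subseteq> Bad" using H by blast
      hence "card X \<le> card Bad" using \<open>Bad \<subseteq> X\<close> fin(1) by (simp add: card_mono finite_subset)
      thus False using \<open>card Bad < card X\<close> by simp
    qed
  qed
  thus ?thesis unfolding Bad_def B1_def B2_def by (auto simp: not_less)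
qed

lemma build:
  fixes k :: nat
  assumes k: "2 * k * \<epsilon> \<le> 1" and ek: "\<epsilon> \<le> c ^ k" and c1: "c \<le> 1"
  shows "m \<le> k \<Longrightarrow> \<exists>a. \<forall>j<k. c ^ m * card Y \<le> card {y\<in>Y. \<forall>i<m. R (a i) y \<longleftrightarrow> i < j}"
proof (induction m)
  case 0
  then show ?case by simp
next
  case (Suc m)
  then obtain a where a: "\<forall>j<k. c ^ m * card Y \<le> card {y\<in>Y. \<forall>i<m. R (a i) y \<longleftrightarrow> i < j}" by auto
  define C where "C j = {y\<in>Y. \<forall>i<m. R (a i) y \<longleftrightarrow> i < j}" for j
  have "c ^ k \<le> c ^ m" using Suc.prems c1 cpos by (simp add: power_decreasing)
  hence "\<epsilon> * card Y \<le> c ^ m * card Y" using ek by (simp add: mult_right_mono)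
  hence "\<forall>j<k. C j \<subseteq> Y \<and> \<epsilon> * card Y \<le> card (C j)" using a unfolding C_def by force
  from good_vertex[OF this k] obtain x where x: "x \<in> X"
    "\<forall>j<k. c * card (C j) \<le> card {y\<in>C j. R x y} \<and> c * card (C j) \<le> card {y\<in>C j. \<not> R x y}" by blast
  define a' where "a' = a(m := x)"
  have eq: "{y\<in>Y. \<forall>i<Suc m. R (a' i) y \<longleftrightarrow> i < j} = (if m < j then {y\<in>C j. R x y} else {y\<in>C j. \<not> R x y})" for j
    unfolding C_def a'_def by (auto simp: less_Suc_eq)
  have "\<forall>j<k. c ^ Suc m * card Y \<le> card {y\<in>Y. \<forall>i<Suc m. R (a' i) y \<longleftrightarrow> i < j}"
  proof (intro allI impI)
    fix j assume j: "j < k"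
    have "c ^ Suc m * card Y = c * (c ^ m * card Y)" by simp
    also have "\<dots> \<le> c * card (C j)" using a j cpos unfolding C_def by (simp add: mult_left_mono)
    also have "\<dots> \<le> card {y\<in>Y. \<forall>i<Suc m. R (a' i) y \<longleftrightarrow> i < j}" using x(2) j eq by simp
    finally show "c ^ Suc m * card Y \<le> card {y\<in>Y. \<forall>i<Suc m. R (a' i) y \<longleftrightarrow> i < j}" .
  qed
  then show ?case by blast
qed

end

theorem mainTheorem4:
  fixes R :: "'a \<Rightarrow> 'b \<Rightarrow> bool" and \<delta> :: real
  assumes sat: "R_saturated R"
    and delta: "0 < \<delta>" "\<delta> < 1"
    and graphs: "\<forall>\<epsilon>::real. 0 < \<epsilon> \<and> \<epsilon> < 1 \<longrightarrow> (\<forall>n::nat.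
        \<exists>(X :: 'a set) (Y :: 'b set). finite X \<and> finite Y \<and> card X = card Y \<and> card X \<ge> n \<and>
          eps_regular \<epsilon> R X Y \<and> \<bar>density R X Y - \<delta>\<bar> < \<epsilon>)"
  shows "order_property R"
proof -
  define c where "c = min \<delta> (1 - \<delta>) / 4"
  have c0: "0 < c" and c1: "c \<le> 1/4" "4 * c \<le> \<delta>" "4 * c \<le> 1 - \<delta>"
    using delta by (auto simp: c_def)
  have fin: "\<exists>a b. \<forall>i<k. \<forall>j<k. R (a i) (b j) \<longleftrightarrow> i < j" for k :: nat
  proof -
    define \<epsilon> where "\<epsilon> = c ^ k * c / (2 * (real k + 1))"
    have ck: "0 < c ^ k" "c ^ k \<le> 1" using c0 c1 by (auto simp: power_le_one)
    have e0: "0 < \<epsilon>" using ck c0 by (simp add: \<epsilon>_def)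
    have "\<epsilon> \<le> c ^ k * c" unfolding \<epsilon>_def using ck c0 by (simp add: divide_le_eq)
    moreover have "c ^ k * c \<le> c" using ck c0 by (simp add: mult_left_le_one_le)
    moreover have "c ^ k * c \<le> c ^ k" using ck c0 c1 by (simp add: mult_left_le)
    ultimately have ec: "\<epsilon> \<le> c" "\<epsilon> \<le> c ^ k" by linarith+
    have "2 * k * \<epsilon> = (k / (k+1)) * (c ^ k * c)" unfolding \<epsilon>_def by (simp add: field_simps)
    also have "\<dots> \<le> 1 * 1" apply (rule mult_mono) using ck c0 c1
      by (auto simp: mult_le_one)
    finally have k2: "2 * k * \<epsilon> \<le> 1" by simp
    have "\<epsilon> < 1" using ec c1 by simp
    with graphs e0 obtain X :: "'a set" and Y :: "'b set" where G: "finite X" "finite Y"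
      "card X = card Y" "card X \<ge> 1" "eps_regular \<epsilon> R X Y" "\<bar>density R X Y - \<delta>\<bar> < \<epsilon>"
      by blast
    have ne: "card X > 0" "card Y > 0" using G by auto
    obtain a where a: "\<forall>j<k. c ^ k * card Y \<le> card {y\<in>Y. \<forall>i<k. R (a i) y \<longleftrightarrow> i < j}"
    proof -
      have d: "density R X Y > \<delta> - \<epsilon>" "density R X Y < \<delta> + \<epsilon>" using G(6) by (simp_all add: abs_less_iff)
      have l: "2*\<epsilon> + c \<le> \<delta>" "\<delta> + 2*\<epsilon> + c \<le> 1" using ec c1 c0 by auto
      have "c \<le> 1" using c1 by simp
      from build[OF G(1,2) ne G(5) d e0 c0 l k2 ec(2) this, of k]
      show ?thesis using that by blast
    qed
    have "\<forall>j. \<exists>y. j < k \<longrightarrow> y \<in> {y\<in>Y. \<forall>i<k. R (a i) y \<longleftrightarrow> i < j}"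
    proof (intro allI)
      fix j show "\<exists>y. j < k \<longrightarrow> y \<in> {y\<in>Y. \<forall>i<k. R (a i) y \<longleftrightarrow> i < j}"
      proof (cases "j < k")
        case True
        have "0 < c ^ k * card Y" using ck ne by simp
        moreover have "c ^ k * card Y \<le> card {y\<in>Y. \<forall>i<k. R (a i) y \<longleftrightarrow> i < j}" using a True by blast
        ultimately have "real (card {y\<in>Y. \<forall>i<k. R (a i) y \<longleftrightarrow> i < j}) > 0" by linarith
        hence "card {y\<in>Y. \<forall>i<k. R (a i) y \<longleftrightarrow> i < j} > 0" by simp
        hence "{y\<in>Y. \<forall>i<k. R (a i) y \<longleftrightarrow> i < j} \<noteq> {}" by (metis card.empty less_irrefl)
        thus ?thesis by blast
      qed simp
    qed
    from choice[OF this] obtain b where "\<forall>j. j < k \<longrightarrow> b j \<in> {y\<in>Y. \<forall>i<k. R (a i) y \<longleftrightarrow> i < j}" by blast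
    thus ?thesis by auto
  qed
  from sat[unfolded R_saturated_def, rule_format, of "\<lambda>i j. i < j"] fin
  show ?thesis unfolding order_property_def by blast
qed

end
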